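(* Let $\mathbf{Y}$ be a generalised binary matrix and let $(\ell,k)$ be a simplicial $1$ of $\mathbf{Y}$. If $\mathbf{Y}'$ is the generalised binary matrix obtained by removing the simplicial $1$ at $(\ell,k)$, then $i(\mathbf{Y})=i(\mathbf{Y}')+1$ and $br(\mathbf{Y})=br(\mathbf{Y}')+1$.
   Context: A generalised binary matrix is a matrix with entries in $\{0,1,?\}$; a (standard) binary matrix has entries in $\{0,1\}$. For such a matrix $\mathbf{Y}$, $\mathrm{supp}(\mathbf{Y})=\{(i,j): y_{i,j}=1\}$. A rectangle of $\mathbf{Y}$ is a set $I\times J$ of positions (with $I$ a set of rows, $J$ a set of columns) such that no entry $y_{i,j}$ with $(i,j)\in I\times J$ equals $0$. An isolated set of $\mathbf{Y}$ is a subset of $\mathrm{supp}(\mathbf{Y})$ no two distinct elements of which lie in a common rectangle of $\mathbf{Y}$; $i(\mathbf{Y})$ is the maximum size of an isolated set. $br(\mathbf{Y})$ is the minimum number of rectangles of $\mathbf{Y}$ whose union contains $\mathrm{supp}(\mathbf{Y})$ (entries equal to $?$ may be covered but need not be). A position $(\ell,k)\in\mathrm{supp}(\mathbf{Y})$ is a simplicial $1$ of $\mathbf{Y}$ if, with $I=\{i: y_{i,k}\in\{1,?\}\}$ and $J=\{j: y_{\ell,j}\in\{1,?\}\}$, the set $I\times J$ is a rectangle of $\mathbf{Y}$. Removing the simplicial $1$ at $(\ell,k)$ means deleting row $\ell$ and column $k$ of $\mathbf{Y}$ and replacing every remaining entry with position in $I\times J$ by $?$. *)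

theory Defs
  imports Main
begin

text \<open>Entries of a generalised binary matrix: 0, 1 or ?.\<close>
datatype entry = Zero | One | Unk

text \<open>A generalised binary matrix with m rows and n columns is represented by its
dimensions together with an entry function; rows are indexed by {0..<m}, columns by
{0..<n}. Values of the entry function outside this range are irrelevant.\<close>

definition supp :: "nat \<Rightarrow> nat \<Rightarrow> (nat \<Rightarrow> nat \<Rightarrow> entry) \<Rightarrow> (nat \<times> nat) set" where
  "supp m n Y = {(i, j). i < m \<and> j < n \<and> Y i j = One}"

definition is_rectangle :: "nat \<Rightarrow> nat \<Rightarrow> (nat \<Rightarrow> nat \<Rightarrow> entry) \<Rightarrow> nat set \<Rightarrow> nat set \<Rightarrow> bool" where
  "is_rectangle m n Y I J \<longleftrightarrow> I \<subseteq> {0..<m} \<and> J \<subseteq> {0..<n} \<and>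
     (\<forall>i\<in>I. \<forall>j\<in>J. Y i j \<noteq> Zero)"

definition isolated_set :: "nat \<Rightarrow> nat \<Rightarrow> (nat \<Rightarrow> nat \<Rightarrow> entry) \<Rightarrow> (nat \<times> nat) set \<Rightarrow> bool" where
  "isolated_set m n Y S \<longleftrightarrow> S \<subseteq> supp m n Y \<and>
     (\<forall>p\<in>S. \<forall>q\<in>S. p \<noteq> q \<longrightarrow>
        \<not> (\<exists>I J. is_rectangle m n Y I J \<and> p \<in> I \<times> J \<and> q \<in> I \<times> J))"

text \<open>i(Y): maximum size of an isolated set (isolated sets are finite, being subsets of supp).\<close>
definition isol_num :: "nat \<Rightarrow> nat \<Rightarrow> (nat \<Rightarrow> nat \<Rightarrow> entry) \<Rightarrow> nat" where
  "isol_num m n Y = Max (card ` {S. isolated_set m n Y S})"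

definition br :: "nat \<Rightarrow> nat \<Rightarrow> (nat \<Rightarrow> nat \<Rightarrow> entry) \<Rightarrow> nat" where
  "br m n Y = (LEAST r. \<exists>R :: (nat set \<times> nat set) set. finite R \<and> card R = r \<and>
       (\<forall>(I, J)\<in>R. is_rectangle m n Y I J) \<and>
       supp m n Y \<subseteq> (\<Union>(I, J)\<in>R. I \<times> J))"

definition col_set :: "nat \<Rightarrow> (nat \<Rightarrow> nat \<Rightarrow> entry) \<Rightarrow> nat \<Rightarrow> nat set" where
  "col_set m Y k = {i. i < m \<and> Y i k \<noteq> Zero}"

definition row_set :: "nat \<Rightarrow> (nat \<Rightarrow> nat \<Rightarrow> entry) \<Rightarrow> nat \<Rightarrow> nat set" where
  "row_set n Y l = {j. j < n \<and> Y l j \<noteq> Zero}"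

definition simplicial_one :: "nat \<Rightarrow> nat \<Rightarrow> (nat \<Rightarrow> nat \<Rightarrow> entry) \<Rightarrow> nat \<Rightarrow> nat \<Rightarrow> bool" where
  "simplicial_one m n Y l k \<longleftrightarrow> (l, k) \<in> supp m n Y \<and>
     is_rectangle m n Y (col_set m Y k) (row_set n Y l)"

text \<open>Index of the old row/column corresponding to a new one after deleting index d.\<close>
definition skip :: "nat \<Rightarrow> nat \<Rightarrow> nat" where
  "skip d i = (if i < d then i else Suc i)"

text \<open>Removing the simplicial 1 at (l,k) of an m \<times> n matrix gives an (m-1) \<times> (n-1) matrix:
delete row l and column k, and replace entries at positions in I \<times> J by ?.\<close>
definition remove_simplicial :: "nat \<Rightarrow> nat \<Rightarrow> (nat \<Rightarrow> nat \<Rightarrow> entry) \<Rightarrow> nat \<Rightarrow> nat \<Rightarrow> (nat \<Rightarrow> nat \<Rightarrow> entry)" where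
  "remove_simplicial m n Y l k = (\<lambda>i j.
     if skip l i \<in> col_set m Y k \<and> skip k j \<in> row_set n Y l then Unk
     else Y (skip l i) (skip k j))"

end

theory Submission
  imports Defs
begin

definition unsk :: "nat \<Rightarrow> nat \<Rightarrow> nat" where
  "unsk d i = (if i < d then i else i - 1)"

lemma skip_ne[simp]: "skip d i \<noteq> d" by (simp add: skip_def)
lemma skip_lt: "i < m - Suc 0 \<Longrightarrow> skip d i < m" by (auto simp: skip_def)
lemma skip_inj: "inj (skip d)" by (auto simp: inj_def skip_def split: if_splits)
lemma skip_unsk[simp]: "i \<noteq> d \<Longrightarrow> skip d (unsk d i) = i" by (auto simp: skip_def unsk_def)
lemma unsk_skip[simp]: "unsk d (skip d i) = i" by (simp add: skip_def unsk_def)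
lemma unsk_lt: "i < m \<Longrightarrow> i \<noteq> d \<Longrightarrow> d < m \<Longrightarrow> unsk d i < m - Suc 0"
  by (auto simp: unsk_def)

lemma finite_supp: "finite (supp m n Y)"
  by (rule finite_subset[of _ "{0..<m} \<times> {0..<n}"]) (auto simp: supp_def)

lemma isol_ge: "isolated_set m n Y S \<Longrightarrow> card S \<le> isol_num m n Y"
proof -
  assume a: "isolated_set m n Y S"
  have fin: "finite (card ` {S. isolated_set m n Y S})"
    by (rule finite_subset[of _ "{0..card (supp m n Y)}"])
       (auto simp: isolated_set_def intro!: card_mono[OF finite_supp])
  show ?thesis unfolding isol_num_def using a fin by (auto intro: Max_ge)
qed

lemma isol_ex: "\<exists>S. isolated_set m n Y S \<and> card S = isol_num m n Y"
proof -
  have fin: "finite (card ` {S. isolated_set m n Y S})"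
    by (rule finite_subset[of _ "{0..card (supp m n Y)}"])
       (auto simp: isolated_set_def intro!: card_mono[OF finite_supp])
  have ne: "isolated_set m n Y {}" by (simp add: isolated_set_def)
  then have "isol_num m n Y \<in> card ` {S. isolated_set m n Y S}"
    unfolding isol_num_def using fin by (intro Max_in) auto
  then show ?thesis by auto
qed

definition cover :: "nat \<Rightarrow> nat \<Rightarrow> (nat \<Rightarrow> nat \<Rightarrow> entry) \<Rightarrow> (nat set \<times> nat set) set \<Rightarrow> bool" where
  "cover m n Y R \<longleftrightarrow> finite R \<and> (\<forall>(I, J)\<in>R. is_rectangle m n Y I J) \<and>
       supp m n Y \<subseteq> (\<Union>(I, J)\<in>R. I \<times> J)"

lemma br_le: "cover m n Y R \<Longrightarrow> br m n Y \<le> card R"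
  unfolding br_def cover_def by (rule Least_le) blast

lemma br_ex: "\<exists>R. cover m n Y R \<and> card R = br m n Y"
proof -
  let ?R = "(\<lambda>(i,j). ({i},{j})) ` supp m n Y"
  have "cover m n Y ?R"
    unfolding cover_def using finite_supp
    by (auto simp: is_rectangle_def supp_def)
  then have "\<exists>r R. finite R \<and> card R = r \<and> (\<forall>(I, J)\<in>R. is_rectangle m n Y I J) \<and>
       supp m n Y \<subseteq> (\<Union>(I, J)\<in>R. I \<times> J)" unfolding cover_def by blast
  then have "\<exists>R. finite R \<and> card R = br m n Y \<and> (\<forall>(I, J)\<in>R. is_rectangle m n Y I J) \<and>
       supp m n Y \<subseteq> (\<Union>(I, J)\<in>R. I \<times> J)"
    unfolding br_def by (rule LeastI_ex)
  then have "\<exists>R. cover m n Y R \<and> card R = br m n Y" unfolding cover_def by blast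
  then show ?thesis .
qed

locale simp1 =
  fixes m n :: nat and Y :: "nat \<Rightarrow> nat \<Rightarrow> entry" and l k :: nat
  assumes s: "simplicial_one m n Y l k"
begin

abbreviation "Y' \<equiv> remove_simplicial m n Y l k"
abbreviation "I \<equiv> col_set m Y k"
abbreviation "J \<equiv> row_set n Y l"

lemma basics: "l < m" "k < n" "Y l k = One" "l \<in> I" "k \<in> J"
  using s by (auto simp: simplicial_one_def supp_def col_set_def row_set_def)

lemma IJ: "i \<in> I \<Longrightarrow> j \<in> J \<Longrightarrow> Y i j \<noteq> Zero"
  using s by (auto simp: simplicial_one_def is_rectangle_def)

lemma zero_iff: "Y' i j = Zero \<longleftrightarrow> Y (skip l i) (skip k j) = Zero"
  using IJ by (auto simp: remove_simplicial_def)

lemma one_iff: "Y' i j = One \<longleftrightarrow> Y (skip l i) (skip k j) = One \<and>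
   \<not> (skip l i \<in> I \<and> skip k j \<in> J)"
  by (auto simp: remove_simplicial_def)

lemma row_l: "(l, b) \<in> supp m n Y \<Longrightarrow> (l, b) \<in> I \<times> J"
  using basics by (auto simp: supp_def row_set_def)

lemma col_k: "(a, k) \<in> supp m n Y \<Longrightarrow> (a, k) \<in> I \<times> J"
  using basics by (auto simp: supp_def col_set_def)

lemma R1: "is_rectangle (m-1) (n-1) Y' A B \<Longrightarrow> is_rectangle m n Y (skip l ` A) (skip k ` B)"
  unfolding is_rectangle_def using zero_iff by (auto 0 3 intro: skip_lt)

lemma R2: "is_rectangle m n Y A B \<Longrightarrow>
   is_rectangle (m-1) (n-1) Y' (unsk l ` (A - {l})) (unsk k ` (B - {k}))"
  unfolding is_rectangle_def using zero_iff basics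
  by (auto 0 3 intro!: unsk_lt)

lemma supp'_D: "(i,j) \<in> supp (m-1) (n-1) Y' \<Longrightarrow>
   (skip l i, skip k j) \<in> supp m n Y - I \<times> J"
  by (auto simp: supp_def one_iff intro: skip_lt)

lemma supp'_I: "(a,b) \<in> supp m n Y - I \<times> J \<Longrightarrow>
   (unsk l a, unsk k b) \<in> supp (m-1) (n-1) Y' \<and> a \<noteq> l \<and> b \<noteq> k"
proof -
  assume h: "(a,b) \<in> supp m n Y - I \<times> J"
  then have "a \<noteq> l" "b \<noteq> k" using row_l col_k by auto
  then show ?thesis using h basics
    by (auto simp: supp_def one_iff intro!: unsk_lt)
qed

definition "f = (\<lambda>(i,j). (skip l i, skip k j))"
definition "g = (\<lambda>(i,j). (unsk l i, unsk k j))"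

lemma f_inj: "inj f"
  using skip_inj unfolding f_def inj_def by auto

lemma iso1: "isolated_set (m-1) (n-1) Y' S \<Longrightarrow>
   isolated_set m n Y (insert (l,k) (f ` S)) \<and> card (insert (l,k) (f ` S)) = card S + 1"
proof -
  assume a: "isolated_set (m-1) (n-1) Y' S"
  have Ssub: "S \<subseteq> supp (m-1) (n-1) Y'" using a by (simp add: isolated_set_def)
  have finS: "finite S" using Ssub finite_supp finite_subset by blast
  have fS: "f ` S \<subseteq> supp m n Y - I \<times> J" using Ssub supp'_D by (auto simp: f_def)
  have lk: "(l,k) \<notin> f ` S" by (auto simp: f_def) (metis skip_ne)
  have card: "card (insert (l,k) (f ` S)) = card S + 1"
    using lk finS card_image[OF inj_on_subset[OF f_inj]] by simp
  have lks: "(l,k) \<in> supp m n Y" using s by (simp add: simplicial_one_def)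
  have H: "\<not> (\<exists>A B. is_rectangle m n Y A B \<and> p \<in> A \<times> B \<and> q \<in> A \<times> B)"
    if p: "p \<in> insert (l,k) (f ` S)" and q: "q \<in> insert (l,k) (f ` S)" and pq: "p \<noteq> q" for p q
  proof
    assume "\<exists>A B. is_rectangle m n Y A B \<and> p \<in> A \<times> B \<and> q \<in> A \<times> B"
    then obtain A B where R: "is_rectangle m n Y A B" "p \<in> A \<times> B" "q \<in> A \<times> B" by blast
    have lkcase: False if "u = (l,k)" "v \<in> f ` S" "u \<in> A \<times> B" "v \<in> A \<times> B" for u v
    proof -
      obtain a b where v: "v = (a,b)" by (cases v)
      have "Y a k \<noteq> Zero" "Y l b \<noteq> Zero" "a < m" "b < n"
        using R(1) that v by (auto simp: is_rectangle_def)
      then have "(a,b) \<in> I \<times> J" by (auto simp: col_set_def row_set_def)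
      then show False using fS that v by auto
    qed
    show False
    proof (cases "p = (l,k)")
      case True
      then show False using lkcase[of p q] q pq R by auto
    next
      case pF: False
      show False
      proof (cases "q = (l,k)")
        case True
        then show False using lkcase[of q p] p pq R by auto
      next
        case False
        then obtain p' q' where pq': "p' \<in> S" "q' \<in> S" "p = f p'" "q = f q'" using p q pF by auto
        then have "p' \<noteq> q'" using pq by auto
        obtain a b c d where ab: "p' = (a,b)" "q' = (c,d)" by (cases p', cases q')
        have R2': "is_rectangle (m-1) (n-1) Y' (unsk l ` (A - {l})) (unsk k ` (B - {k}))"
          using R2[OF R(1)] .
        have mem: "x \<in> unsk d ` (X - {d})" if "skip d x \<in> X" for x d X
          using that by (metis DiffI image_eqI singletonD skip_ne unsk_skip)
        have "skip l a \<in> A" "skip k b \<in> B" "skip l c \<in> A" "skip k d \<in> B"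
          using R(2,3) pq' ab by (auto simp: f_def)
        then have "p' \<in> unsk l ` (A - {l}) \<times> unsk k ` (B - {k})"
          "q' \<in> unsk l ` (A - {l}) \<times> unsk k ` (B - {k})"
          using ab mem by auto
        moreover note R2'
        ultimately have "\<exists>A B. is_rectangle (m-1) (n-1) Y' A B \<and> p' \<in> A \<times> B \<and> q' \<in> A \<times> B"
          by blast
        then show False using a pq'(1,2) \<open>p' \<noteq> q'\<close> unfolding isolated_set_def by blast
      qed
    qed
  qed
  have sub: "insert (l,k) (f ` S) \<subseteq> supp m n Y" using fS lks by auto
  have "isolated_set m n Y (insert (l,k) (f ` S))"
    unfolding isolated_set_def
    apply (intro conjI ballI impI)
     apply (fact sub)
    apply (rule H; assumption)
    done
  with card show ?thesis by blast
qed

lemma iso2: "isolated_set m n Y S \<Longrightarrow>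
   \<exists>S'. isolated_set (m-1) (n-1) Y' S' \<and> card S \<le> card S' + 1"
proof -
  assume a: "isolated_set m n Y S"
  have Ssub: "S \<subseteq> supp m n Y" using a by (simp add: isolated_set_def)
  have finS: "finite S" using Ssub finite_supp finite_subset by blast
  let ?T = "S - I \<times> J"
  have "\<forall>x\<in>S \<inter> I \<times> J. \<forall>y\<in>S \<inter> I \<times> J. x = y"
      using a s unfolding isolated_set_def simplicial_one_def by blast
  then have le1: "card (S \<inter> I \<times> J) \<le> 1"
    using card_le_Suc0_iff_eq[of "S \<inter> I \<times> J"] finS by simp
  have "card S = card ?T + card (S \<inter> I \<times> J)"
    using finS by (metis Int_Diff_disjoint Un_Diff_Int card_Un_disjoint finite_Diff finite_Int inf_commute)
  then have cT: "card S \<le> card ?T + 1" using le1 by linarith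
  have Tprop: "\<And>p. p \<in> ?T \<Longrightarrow> g p \<in> supp (m-1) (n-1) Y' \<and> fst p \<noteq> l \<and> snd p \<noteq> k"
  proof -
    fix p assume "p \<in> ?T"
    then show "g p \<in> supp (m-1) (n-1) Y' \<and> fst p \<noteq> l \<and> snd p \<noteq> k"
      using Ssub supp'_I[of "fst p" "snd p"] by (cases p) (auto simp: g_def)
  qed
  have fg: "f (g p) = p" if "p \<in> ?T" for p
  proof -
    obtain a b where "p = (a,b)" by (cases p)
    moreover have "a \<noteq> l" "b \<noteq> k" using Tprop[OF that] \<open>p = (a,b)\<close> by auto
    ultimately show ?thesis by (simp add: f_def g_def)
  qed
  have ginj: "inj_on g ?T"
  proof
    fix p q assume "p \<in> ?T" "q \<in> ?T" "g p = g q"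
    then have "f (g p) = f (g q)" by simp
    then show "p = q" using fg \<open>p \<in> ?T\<close> \<open>q \<in> ?T\<close> by metis
  qed
  have H: "\<not> (\<exists>A B. is_rectangle (m-1) (n-1) Y' A B \<and> p \<in> A \<times> B \<and> q \<in> A \<times> B)"
    if p: "p \<in> g ` ?T" and q: "q \<in> g ` ?T" and pq: "p \<noteq> q" for p q
  proof
    assume "\<exists>A B. is_rectangle (m-1) (n-1) Y' A B \<and> p \<in> A \<times> B \<and> q \<in> A \<times> B"
    then obtain A B where R: "is_rectangle (m-1) (n-1) Y' A B" "p \<in> A \<times> B" "q \<in> A \<times> B" by blast
    obtain p0 q0 where P: "p0 \<in> ?T" "q0 \<in> ?T" "p = g p0" "q = g q0" using p q by auto
    have "p0 \<noteq> q0" using P pq by auto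
    have "f p \<in> skip l ` A \<times> skip k ` B" "f q \<in> skip l ` A \<times> skip k ` B"
      using R by (auto simp: f_def split: prod.splits)
    moreover have "f p = p0" "f q = q0" using P fg by auto
    ultimately have "\<exists>A B. is_rectangle m n Y A B \<and> p0 \<in> A \<times> B \<and> q0 \<in> A \<times> B"
      using R1[OF R(1)] by metis
    moreover have "p0 \<in> S" "q0 \<in> S" using P by auto
    ultimately show False using a \<open>p0 \<noteq> q0\<close> unfolding isolated_set_def by blast
  qed
  have sub: "g ` ?T \<subseteq> supp (m-1) (n-1) Y'"
  proof (rule image_subsetI)
    fix p assume "p \<in> ?T" then show "g p \<in> supp (m-1) (n-1) Y'" using Tprop by blast
  qed
  have "isolated_set (m-1) (n-1) Y' (g ` ?T)"
    unfolding isolated_set_def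
    apply (intro conjI ballI impI)
     apply (fact sub)
    apply (rule H; assumption)
    done
  moreover have "card (g ` ?T) = card ?T" using card_image[OF ginj] .
  ultimately show ?thesis using cT by auto
qed

lemma isol: "isol_num m n Y = isol_num (m - 1) (n - 1) Y' + 1"
proof -
  obtain S' where S': "isolated_set (m-1) (n-1) Y' S'" "card S' = isol_num (m-1) (n-1) Y'"
    using isol_ex by blast
  have ge: "isol_num (m-1) (n-1) Y' + 1 \<le> isol_num m n Y"
    using iso1[OF S'(1)] isol_ge S'(2) by metis
  obtain S where S: "isolated_set m n Y S" "card S = isol_num m n Y"
    using isol_ex by blast
  obtain T where "isolated_set (m-1) (n-1) Y' T" "card S \<le> card T + 1" using iso2[OF S(1)] by blast
  then have "isol_num m n Y \<le> isol_num (m-1) (n-1) Y' + 1" using isol_ge S(2) by fastforce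
  with ge show ?thesis by linarith
qed

definition "F = (\<lambda>(A,B). (skip l ` A, skip k ` B))"
definition "G = (\<lambda>(A,B). (unsk l ` (A - {l}), unsk k ` (B - {k})))"

lemma cov1: "cover (m-1) (n-1) Y' R \<Longrightarrow> br m n Y \<le> card R + 1"
proof -
  assume c: "cover (m-1) (n-1) Y' R"
  have finR: "finite R" using c by (simp add: cover_def)
  have Finj: "inj F"
  proof (rule injI)
    fix x y assume e: "F x = F y"
    obtain a b c d where xy: "x = (a,b)" "y = (c,d)" by (cases x, cases y)
    then have "F (a,b) = F (c,d)" using e by simp
    then have e1: "skip l ` a = skip l ` c" and e2: "skip k ` b = skip k ` d" by (simp_all add: F_def)
    have "a = c" using e1 by (simp add: inj_image_eq_iff[OF skip_inj])
    moreover have "b = d" using e2 by (simp add: inj_image_eq_iff[OF skip_inj])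
    ultimately have "a = c" "b = d" by simp_all
    then show "x = y" using xy by simp
  qed
  have notin: "(I,J) \<notin> F ` R"
  proof
    assume "(I,J) \<in> F ` R"
    then obtain A B where "I = skip l ` A" by (auto simp: F_def)
    then show False using basics(4) by (auto, metis skip_ne)
  qed
  let ?R = "insert (I,J) (F ` R)"
  have card: "card ?R = card R + 1"
    using notin finR card_image[OF inj_on_subset[OF Finj]] by simp
  have rects: "\<forall>(A,B)\<in>?R. is_rectangle m n Y A B"
  proof
    fix x assume x: "x \<in> ?R"
    show "case x of (A,B) \<Rightarrow> is_rectangle m n Y A B"
    proof (cases "x = (I,J)")
      case True then show ?thesis using s by (simp add: simplicial_one_def)
    next
      case False
      then obtain A B where "(A,B) \<in> R" "x = F (A,B)" using x by auto
      then show ?thesis using c R1 by (auto simp: cover_def F_def)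
    qed
  qed
  have covers: "supp m n Y \<subseteq> (\<Union>(A,B)\<in>?R. A \<times> B)"
  proof
    fix p assume p: "p \<in> supp m n Y"
    obtain a b where ab: "p = (a,b)" by (cases p)
    show "p \<in> (\<Union>(A,B)\<in>?R. A \<times> B)"
    proof (cases "p \<in> I \<times> J")
      case True then show ?thesis by blast
    next
      case False
      then have h: "(unsk l a, unsk k b) \<in> supp (m-1) (n-1) Y'" "a \<noteq> l" "b \<noteq> k"
        using supp'_I[of a b] p ab by auto
      then obtain A B where AB: "(A,B) \<in> R" "(unsk l a, unsk k b) \<in> A \<times> B"
        using c unfolding cover_def by blast
      then have m: "(a,b) \<in> skip l ` A \<times> skip k ` B"
        using h by (metis SigmaD1 SigmaD2 SigmaI image_eqI skip_unsk)
      have FR: "F (A,B) \<in> ?R" using AB by auto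
      show ?thesis
        by (rule UN_I[OF FR]) (simp only: F_def prod.case ab m)
    qed
  qed
  have "cover m n Y ?R" unfolding cover_def using finR rects covers by auto
  then show ?thesis using br_le card by metis
qed

lemma cov2: "cover m n Y R \<Longrightarrow> br (m-1) (n-1) Y' + 1 \<le> card R"
proof -
  assume c: "cover m n Y R"
  have finR: "finite R" using c by (simp add: cover_def)
  have lks: "(l,k) \<in> supp m n Y" using s by (simp add: simplicial_one_def)
  then obtain A0 B0 where AB0: "(A0,B0) \<in> R" "l \<in> A0" "k \<in> B0"
    using c unfolding cover_def by blast
  have rect0: "is_rectangle m n Y A0 B0" using c AB0 by (auto simp: cover_def)
  have sub0: "A0 \<times> B0 \<subseteq> I \<times> J"
  proof
    fix p assume "p \<in> A0 \<times> B0"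
    then show "p \<in> I \<times> J" using rect0 AB0
      by (auto simp: is_rectangle_def col_set_def row_set_def)
  qed
  let ?R = "G ` (R - {(A0,B0)})"
  have cardle: "card ?R + 1 \<le> card R"
  proof -
    have "card ?R \<le> card (R - {(A0,B0)})" using finR card_image_le by blast
    moreover have "card (R - {(A0,B0)}) + 1 = card R" using finR AB0(1)
      by (metis One_nat_def Suc_pred add.commute card_Diff_singleton card_gt_0_iff empty_iff plus_1_eq_Suc)
    ultimately show ?thesis by linarith
  qed
  have rects: "\<forall>(A,B)\<in>?R. is_rectangle (m-1) (n-1) Y' A B"
  proof
    fix x assume "x \<in> ?R"
    then obtain A B where "(A,B) \<in> R" "x = G (A,B)" by auto
    then show "case x of (A,B) \<Rightarrow> is_rectangle (m-1) (n-1) Y' A B"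
      using c R2 by (auto simp: cover_def G_def)
  qed
  have covers: "supp (m-1) (n-1) Y' \<subseteq> (\<Union>(A,B)\<in>?R. A \<times> B)"
  proof
    fix p assume p: "p \<in> supp (m-1) (n-1) Y'"
    obtain i j where ij: "p = (i,j)" by (cases p)
    have h: "(skip l i, skip k j) \<in> supp m n Y - I \<times> J" using supp'_D p ij by auto
    then obtain A B where AB: "(A,B) \<in> R" "(skip l i, skip k j) \<in> A \<times> B"
      using c unfolding cover_def by blast
    have "(A,B) \<noteq> (A0,B0)" using AB h sub0 by auto
    then have GR: "G (A,B) \<in> ?R" using AB by auto
    have m: "(i,j) \<in> unsk l ` (A - {l}) \<times> unsk k ` (B - {k})"
      using AB(2) by (metis DiffI image_eqI singletonD skip_ne unsk_skip SigmaD1 SigmaD2 SigmaI)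
    show "p \<in> (\<Union>(A,B)\<in>?R. A \<times> B)"
      by (rule UN_I[OF GR]) (simp only: G_def prod.case ij m)
  qed
  have "cover (m-1) (n-1) Y' ?R" unfolding cover_def using finR rects covers by auto
  then show ?thesis using br_le cardle by (meson add_le_mono1 le_trans)
qed

lemma brr: "br m n Y = br (m - 1) (n - 1) Y' + 1"
proof -
  obtain R' where "cover (m-1) (n-1) Y' R'" "card R' = br (m-1) (n-1) Y'" using br_ex by blast
  then have "br m n Y \<le> br (m-1) (n-1) Y' + 1" using cov1 by metis
  moreover obtain R where "cover m n Y R" "card R = br m n Y" using br_ex by blast
  then have "br (m-1) (n-1) Y' + 1 \<le> br m n Y" using cov2 by metis
  ultimately show ?thesis by linarith
qed

end

theorem lemma1:
  fixes m n l k :: nat and Y :: "nat \<Rightarrow> nat \<Rightarrow> entry"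
  assumes "simplicial_one m n Y l k"
  shows "isol_num m n Y = isol_num (m - 1) (n - 1) (remove_simplicial m n Y l k) + 1
       \<and> br m n Y = br (m - 1) (n - 1) (remove_simplicial m n Y l k) + 1"
  using simp1.isol[OF simp1.intro[OF assms]] simp1.brr[OF simp1.intro[OF assms]] by blast

end
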